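(* Let $\mathcal{K}\subseteq\mathcal{E}$ be a full-dimensional pointed closed convex cone in a finite-dimensional Euclidean space $\mathcal{E}$. If $\mathcal{F}$ is an amenable face of $\mathcal{K}$ of codimension $1$ (i.e. $\dim\mathcal{F}=\dim\mathcal{K}-1$), then $\mathcal{F}$ is projectionally exposed.
   Context: A face of a closed convex cone $\mathcal{K}$ is a closed convex subset $\mathcal{F}\subseteq\mathcal{K}$ such that whenever $x,y\in\mathcal{K}$ and $\alpha x+(1-\alpha)y\in\mathcal{F}$ for some $\alpha\in(0,1)$, then $x,y\in\mathcal{F}$. A face $\mathcal{F}$ is amenable if for every bounded set $B$ there exists $\kappa>0$ with $\operatorname{dist}(x,\mathcal{F})\le\kappa\operatorname{dist}(x,\mathcal{K})$ for all $x\in(\operatorname{span}\mathcal{F})\cap B$ (equivalently, for cones, a single $\kappa$ works for all $x\in\operatorname{span}\mathcal{F}$). A face $\mathcal{F}$ is projectionally exposed if there is an idempotent linear map $P:\mathcal{E}\to\mathcal{E}$ (not necessarily orthogonal) with $P(\mathcal{K})=\mathcal{F}$. Pointed means $\mathcal{K}\cap(-\mathcal{K})=\{0\}$; full-dimensional means $\dim\mathcal{K}=\dim\mathcal{E}$. *)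

theory Defs
  imports "HOL-Analysis.Analysis"
begin

definition closed_convex_cone :: "'a::euclidean_space set \<Rightarrow> bool" where
  "closed_convex_cone K \<longleftrightarrow> K \<noteq> {} \<and> closed K \<and> convex K \<and> cone K"

definition pointed_cone :: "'a::euclidean_space set \<Rightarrow> bool" where
  "pointed_cone K \<longleftrightarrow> K \<inter> uminus ` K = {0}"

definition full_dimensional :: "'a::euclidean_space set \<Rightarrow> bool" where
  "full_dimensional K \<longleftrightarrow> aff_dim K = int DIM('a)"

definition is_face :: "'a::euclidean_space set \<Rightarrow> 'a set \<Rightarrow> bool" where
  "is_face F K \<longleftrightarrow> closed F \<and> convex F \<and> F \<subseteq> K \<and>
     (\<forall>x\<in>K. \<forall>y\<in>K. \<forall>\<alpha>::real. 0 < \<alpha> \<and> \<alpha> < 1 \<and> \<alpha> *\<^sub>R x + (1 - \<alpha>) *\<^sub>R y \<in> F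
        \<longrightarrow> x \<in> F \<and> y \<in> F)"

definition amenable_face :: "'a::euclidean_space set \<Rightarrow> 'a set \<Rightarrow> bool" where
  "amenable_face F K \<longleftrightarrow> is_face F K \<and>
     (\<forall>B. bounded B \<longrightarrow> (\<exists>\<kappa>>0. \<forall>x \<in> span F \<inter> B. infdist x F \<le> \<kappa> * infdist x K))"

definition projectionally_exposed :: "'a::euclidean_space set \<Rightarrow> 'a set \<Rightarrow> bool" where
  "projectionally_exposed F K \<longleftrightarrow> is_face F K \<and>
     (\<exists>P::'a \<Rightarrow> 'a. linear P \<and> P \<circ> P = P \<and> P ` K = F)"

end

theory Submission
  imports Defs
begin

lemma infdist_scale:
  fixes C :: "'a::euclidean_space set"
  assumes "closed C" "C \<noteq> {}" "\<forall>y\<in>C. \<forall>s\<ge>0. s *\<^sub>R y \<in> C" "t > 0"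
  shows "infdist (t *\<^sub>R z) C \<le> t * infdist z C"
proof -
  obtain y where y: "y \<in> C" "infdist z C = dist z y" using infdist_attains_inf[OF assms(1,2)] by blast
  have "t *\<^sub>R y \<in> C" using assms(3,4) y(1) by auto
  then have "infdist (t *\<^sub>R z) C \<le> dist (t *\<^sub>R z) (t *\<^sub>R y)" by (rule infdist_le)
  also have "\<dots> = t * dist z y" using assms(4)
    by (simp add: dist_norm scaleR_diff_right[symmetric])
  finally show ?thesis using y by simp
qed

lemma half_comb:
  fixes w y1 y2 :: "'a::real_vector" and s r :: real
  shows "(1/2::real) *\<^sub>R (w + (2 * s) *\<^sub>R y1) + (1 - 1/2) *\<^sub>R (w + (2 * r) *\<^sub>R y2) = w + s *\<^sub>R y1 + r *\<^sub>R y2"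
proof -
  have "(1/2::real) *\<^sub>R (w + (2 * s) *\<^sub>R y1) + (1 - 1/2) *\<^sub>R (w + (2 * r) *\<^sub>R y2)
     = ((1/2::real) + 1/2) *\<^sub>R w + s *\<^sub>R y1 + r *\<^sub>R y2"
    by (simp only: scaleR_add_right scaleR_add_left scaleR_scaleR) (simp add: algebra_simps)
  then show ?thesis by simp
qed

theorem theorem6p2:
  fixes K F :: "'a::euclidean_space set"
  assumes "closed_convex_cone K"
    and "full_dimensional K"
    and "pointed_cone K"
    and "amenable_face F K"
    and "aff_dim F = aff_dim K - 1"
  shows "projectionally_exposed F K"
proof -
  have Kne: "K \<noteq> {}" and Kcl: "closed K" and Kcv: "convex K" and Kco: "cone K"
    using assms(1) unfolding closed_convex_cone_def by auto
  have Kadd: "\<forall>x\<in>K. \<forall>y\<in>K. x + y \<in> K" and Ksc: "\<forall>x\<in>K. \<forall>c\<ge>0. c *\<^sub>R x \<in> K"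
    using convex_cone[of K] Kcv Kco by auto
  have isf: "is_face F K" using assms(4) unfolding amenable_face_def by auto
  have Fcl: "closed F" and Fcv: "convex F" and FK: "F \<subseteq> K"
    and fface: "\<And>x y \<alpha>. x \<in> K \<Longrightarrow> y \<in> K \<Longrightarrow> 0 < \<alpha> \<Longrightarrow> \<alpha> < 1 \<Longrightarrow>
        \<alpha> *\<^sub>R x + (1 - \<alpha>) *\<^sub>R y \<in> F \<Longrightarrow> x \<in> F \<and> y \<in> F"
    using isf unfolding is_face_def by blast+
  have affK: "aff_dim K = int DIM('a)" using assms(2) unfolding full_dimensional_def by simp
  have Fne: "F \<noteq> {}"
  proof
    assume "F = {}"
    then have "aff_dim F = -1" by simp
    then show False using assms(5) affK DIM_positive[where 'a='a] by simp
  qed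
  then obtain x0 where x0: "x0 \<in> F" by blast
  have K0: "0 \<in> K" using Ksc Kne by (metis all_not_in_conv scaleR_zero_left order_refl)
  have F0: "0 \<in> F"
  proof -
    have "(2::real) *\<^sub>R x0 \<in> K" using Ksc x0 FK by auto
    moreover have "(1/2::real) *\<^sub>R ((2::real) *\<^sub>R x0) + (1 - 1/2) *\<^sub>R 0 \<in> F" using x0 by simp
    ultimately show ?thesis using fface[of "(2::real) *\<^sub>R x0" 0 "1/2"] K0 by simp
  qed
  have Fsc: "\<forall>x\<in>F. \<forall>c\<ge>0. c *\<^sub>R x \<in> F"
  proof (intro ballI allI impI)
    fix x and c :: real assume x: "x \<in> F" and c: "0 \<le> c"
    show "c *\<^sub>R x \<in> F"
    proof (cases "c \<le> 1")
      case True
      then have "c *\<^sub>R x + (1 - c) *\<^sub>R 0 \<in> F"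
        using convexD[OF Fcv x F0, of c "1 - c"] c by simp
      then show ?thesis by simp
    next
      case False
      have "c *\<^sub>R x \<in> K" using Ksc x FK c by auto
      moreover have "(1/c) *\<^sub>R (c *\<^sub>R x) + (1 - 1/c) *\<^sub>R 0 \<in> F" using x False by simp
      ultimately show ?thesis using fface[of "c *\<^sub>R x" 0 "1/c"] K0 False by simp
    qed
  qed
  have Fadd: "\<forall>x\<in>F. \<forall>y\<in>F. x + y \<in> F"
    using convex_cone[of F] Fcv Fsc unfolding cone_def by auto
  have "aff_dim F = int (dim F)"
    using aff_dim_eq_dim[of 0 F] F0 by (simp add: hull_inc)
  then have "dim F = DIM('a) - 1" using assms(5) affK by simp
  then obtain a0 :: 'a where a0: "a0 \<noteq> 0" "span F = {x. a0 \<bullet> x = 0}"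
    using dim_eq_hyperplane by blast
  have ahF: "affine hull F = span F" by (rule affine_hull_span_0) (simp add: hull_inc F0)
  obtain c where "c \<in> rel_interior F" using rel_interior_eq_empty[OF Fcv] Fne by blast
  then obtain \<rho> where c: "c \<in> F" and rho: "\<rho> > 0" and crho: "cball c \<rho> \<inter> span F \<subseteq> F"
    using mem_rel_interior_cball ahF by metis
  have oneside: False if y1: "y1 \<in> K" "a0 \<bullet> y1 > 0" and y2: "y2 \<in> K" "a0 \<bullet> y2 < 0" for y1 y2
  proof -
    define p where "p = a0 \<bullet> y1"
    define q where "q = - (a0 \<bullet> y2)"
    have p: "p > 0" and q: "q > 0" using y1 y2 by (auto simp: p_def q_def)
    define z where "z = q *\<^sub>R y1 + p *\<^sub>R y2"
    have az: "a0 \<bullet> z = 0" by (simp add: z_def inner_add_right inner_diff_right p_def q_def)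
    define \<delta> where "\<delta> = \<rho> / (2 * (norm z + 1))"
    have "2 * (norm z + 1) > 0" by (simp add: add_nonneg_pos)
    then have dpos: "\<delta> > 0" using rho unfolding \<delta>_def by (rule divide_pos_pos[rotated])
    have "norm (\<delta> *\<^sub>R z) = \<rho> * norm z / (2 * (norm z + 1))"
      using dpos rho by (simp add: \<delta>_def)
    also have "\<dots> \<le> \<rho>"
    proof -
      have d: "2 * (norm z + 1) > 0" by (simp add: add_nonneg_pos)
      have "\<rho> * norm z \<le> \<rho> * (2 * (norm z + 1))" using rho by (intro mult_left_mono) auto
      then show ?thesis using d by (simp add: pos_divide_le_eq)
    qed
    finally have nz: "norm (\<delta> *\<^sub>R z) \<le> \<rho>" .
    define w where "w = c - \<delta> *\<^sub>R z"
    have ac0: "a0 \<bullet> c = 0" using c a0(2) span_superset[of F] by blast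
    have "a0 \<bullet> w = 0" by (simp add: w_def inner_diff_right az ac0)
    then have wspan: "w \<in> span F" using a0(2) by simp
    have "w \<in> cball c \<rho>" using nz by (simp add: w_def dist_norm)
    then have wF: "w \<in> F" using crho wspan by blast
    define u1 where "u1 = w + (2 * (\<delta> * q)) *\<^sub>R y1"
    define u2 where "u2 = w + (2 * (\<delta> * p)) *\<^sub>R y2"
    have wK: "w \<in> K" using wF FK by blast
    have "(2 * (\<delta> * q)) *\<^sub>R y1 \<in> K" using Ksc y1(1) dpos q by simp
    then have u1K: "u1 \<in> K" unfolding u1_def using Kadd wK by blast
    have "(2 * (\<delta> * p)) *\<^sub>R y2 \<in> K" using Ksc y2(1) dpos p by simp
    then have u2K: "u2 \<in> K" unfolding u2_def using Kadd wK by blast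
    have "(1/2::real) *\<^sub>R u1 + (1 - 1/2) *\<^sub>R u2 = w + (\<delta> * q) *\<^sub>R y1 + (\<delta> * p) *\<^sub>R y2"
      unfolding u1_def u2_def by (rule half_comb)
    also have "\<dots> = c" by (simp add: w_def z_def scaleR_add_right algebra_simps)
    finally have "(1/2::real) *\<^sub>R u1 + (1 - 1/2) *\<^sub>R u2 = c" .
    then have "u1 \<in> F" using fface[OF u1K u2K, of "1/2"] c by simp
    then have "a0 \<bullet> u1 = 0" using a0 span_superset[of F] by auto
    moreover have "a0 \<bullet> w = 0" by fact
    ultimately have "2 * (\<delta> * q) * p = 0" by (simp add: u1_def inner_add_right p_def)
    then show False using dpos p q by simp
  qed
  obtain a :: 'a where a: "a \<noteq> 0" "span F = {x. a \<bullet> x = 0}" "\<forall>x\<in>K. a \<bullet> x \<ge> 0"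
  proof (cases "\<forall>x\<in>K. a0 \<bullet> x \<ge> 0")
    case True then show ?thesis using that a0 by blast
  next
    case False
    then have "\<forall>x\<in>K. (- a0) \<bullet> x \<ge> 0" using oneside by force
    moreover have "span F = {x. (- a0) \<bullet> x = 0}" using a0 by simp
    ultimately show ?thesis using that a0 by (metis neg_equal_0_iff_equal)
  qed
  have spanF: "x \<in> span F \<longleftrightarrow> a \<bullet> x = 0" for x using a by auto
  have KH: "x \<in> F" if "x \<in> K" "a \<bullet> x = 0" for x
  proof -
    obtain \<kappa> where "\<kappa> > 0" "\<forall>y \<in> span F \<inter> {x}. infdist y F \<le> \<kappa> * infdist y K"
      using assms(4) unfolding amenable_face_def by (meson bounded_insert bounded_empty)
    then have "infdist x F \<le> \<kappa> * infdist x K" using that spanF by auto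
    moreover have "infdist x K = 0" using infdist_le[OF that(1), of x] infdist_nonneg[of x K] by simp
    ultimately have "infdist x F = 0" using infdist_nonneg[of x F] by simp
    then show ?thesis using in_closure_iff_infdist_zero[OF Fne] Fcl by (simp add: closure_closed)
  qed
  obtain \<kappa> where kpos: "\<kappa> > 0" and kap1: "\<forall>x \<in> span F \<inter> cball 0 1. infdist x F \<le> \<kappa> * infdist x K"
    using assms(4) unfolding amenable_face_def by (meson bounded_cball)
  have kap: "infdist x F \<le> \<kappa> * infdist x K" if x: "x \<in> span F" for x
  proof (cases "x = 0")
    case True
    then have "infdist x F = 0" using infdist_le[OF F0, of x] infdist_nonneg[of x F] by simp
    then show ?thesis using kpos infdist_nonneg[of x K] by simp
  next
    case False
    define r where "r = norm x"
    have r: "r > 0" using False by (simp add: r_def)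
    define x' where "x' = (1/r) *\<^sub>R x"
    have x'm: "x' \<in> span F \<inter> cball 0 1" using x r by (simp add: x'_def r_def span_scale)
    have xx: "x = r *\<^sub>R x'" using r by (simp add: x'_def)
    have "infdist x F \<le> r * infdist x' F" using infdist_scale[OF Fcl Fne Fsc r, of x'] xx by simp
    also have "\<dots> \<le> r * (\<kappa> * infdist x' K)" using kap1 x'm r by (simp add: mult_left_mono)
    also have "\<dots> \<le> r * (\<kappa> * ((1/r) * infdist x K))"
    proof -
      have "infdist x' K \<le> (1/r) * infdist x K"
        using infdist_scale[OF Kcl Kne Ksc, of "1/r" x] r by (simp add: x'_def)
      then have "\<kappa> * infdist x' K \<le> \<kappa> * ((1/r) * infdist x K)" by (rule mult_left_mono) (use kpos in auto)
      then show ?thesis by (rule mult_left_mono) (use r in auto)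
    qed
    also have "\<dots> = \<kappa> * infdist x K" using r by simp
    finally show ?thesis .
  qed
  define e where "e = (1 / (a \<bullet> a)) *\<^sub>R a"
  have ae: "a \<bullet> e = 1" using a(1) by (simp add: e_def)
  have epos: "norm e > 0" using ae by auto
  define M where "M = 2 * \<kappa> * norm e / \<rho>"
  have Mpos: "M > 0" using kpos epos rho by (simp add: M_def)
  define v where "v = e - M *\<^sub>R c"
  have ac: "a \<bullet> c = 0" using c spanF span_superset[of F] by auto
  have av: "a \<bullet> v = 1" using ae ac by (simp add: v_def inner_diff_right)
  have main: "x - (a \<bullet> x) *\<^sub>R v \<in> F" if x: "x \<in> K" for x
  proof -
    define t where "t = a \<bullet> x"
    have t0: "t \<ge> 0" using a x by (simp add: t_def)
    show ?thesis
    proof (cases "t = 0")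
      case True then show ?thesis using KH x by (simp add: t_def)
    next
      case False
      then have tpos: "t > 0" using t0 by simp
      define p where "p = x - t *\<^sub>R e"
      have pspan: "p \<in> span F" using ae spanF by (simp add: p_def inner_diff_right t_def)
      have "infdist p K \<le> dist p x" by (rule infdist_le[OF x])
      also have "\<dots> = t * norm e" using tpos by (simp add: p_def dist_norm)
      finally have "infdist p F \<le> \<kappa> * (t * norm e)"
        using kap[OF pspan] kpos by (meson mult_left_mono less_imp_le order_trans)
      moreover obtain f where f: "f \<in> F" "infdist p F = dist p f"
        using infdist_attains_inf[OF Fcl Fne] by blast
      ultimately have pf: "norm (p - f) \<le> \<kappa> * t * norm e" by (simp add: dist_norm mult.assoc)
      define b where "b = p - f"
      have bspan: "b \<in> span F" unfolding b_def using pspan f(1) span_superset[of F] by (metis span_diff subsetD)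
      define q where "q = c + (1 / (t * M)) *\<^sub>R b"
      have "norm ((1 / (t * M)) *\<^sub>R b) = norm b / (t * M)" using tpos Mpos by simp
      also have "\<dots> \<le> \<kappa> * t * norm e / (t * M)"
        using pf tpos Mpos unfolding b_def by (intro divide_right_mono) auto
      also have "\<dots> = \<rho> / 2" using tpos rho kpos epos by (simp add: M_def field_simps)
      finally have "norm ((1 / (t * M)) *\<^sub>R b) \<le> \<rho> / 2" .
      then have "norm ((1 / (t * M)) *\<^sub>R b) \<le> \<rho>" using rho by linarith
      then have "q \<in> cball c \<rho>" by (simp add: q_def dist_norm)
      moreover have "q \<in> span F" unfolding q_def using c bspan span_superset[of F]
        by (metis span_add span_scale subsetD)
      ultimately have "q \<in> F" using crho by blast
      then have "(t * M) *\<^sub>R q \<in> F" using Fsc tpos Mpos by simp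
      then have "f + (t * M) *\<^sub>R q \<in> F" using Fadd f by simp
      moreover have "f + (t * M) *\<^sub>R q = x - t *\<^sub>R v"
        using tpos Mpos by (simp add: q_def b_def p_def v_def algebra_simps)
      ultimately show ?thesis by (simp add: t_def)
    qed
  qed
  define P where "P = (\<lambda>x. x - (a \<bullet> x) *\<^sub>R v)"
  have linP: "linear P"
    by (rule linearI) (simp_all add: P_def inner_add_right algebra_simps)
  have idem: "P \<circ> P = P"
    by (rule ext) (simp add: P_def inner_diff_right av)
  have img: "P ` K = F"
  proof
    show "P ` K \<subseteq> F" using main by (auto simp: P_def)
  next
    show "F \<subseteq> P ` K"
    proof
      fix y assume y: "y \<in> F"
      then have "a \<bullet> y = 0" using spanF span_superset[of F] by auto
      then have "P y = y" by (simp add: P_def)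
      then show "y \<in> P ` K" using y FK by (metis image_eqI subsetD)
    qed
  qed
  show ?thesis unfolding projectionally_exposed_def using isf linP idem img by blast
qed

end
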